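(* Let $\mathcal A=(\Sigma,Q^\mathcal A,q^\mathcal A_0,\Omega^\mathcal A,\Delta^\mathcal A)$ and $\mathcal B=(\Sigma,Q^\mathcal B,q^\mathcal B_0,\Omega^\mathcal B,\Delta^\mathcal B)$ be nondeterministic parity tree automata with $L(\mathcal A)\cap L(\mathcal B)=\emptyset$. Then there is a function $\mathcal P:\bigcup_{a\in\Sigma}\Delta^\mathcal A(a)\times\Delta^\mathcal B(a)\to\{\mathsf L,\mathsf R\}$ such that Pathfinder wins every play of the disjointness game $G_\cap(\mathcal A,\mathcal B)$ in which she always plays $d_i:=\mathcal P(\delta^\mathcal A_i,\delta^\mathcal B_i)$.
   Context: Trees are maps $t:\{\mathsf L,\mathsf R\}^*\to\Sigma$. A nondeterministic parity tree automaton $(\Sigma,Q,q_0,\Omega,\Delta)$ has $\Omega:Q\to\mathbb N$ and $\Delta\subseteq Q\times\Sigma\times Q\times Q$; a run on $t$ is $\rho$ with $\rho(\epsilon)=q_0$ and $(\rho(u),t(u),\rho(u\mathsf L),\rho(u\mathsf R))\in\Delta$, accepting if on every branch the maximal priority seen infinitely often is even; $L(\cdot)$ denotes the recognised language. The priority of a transition $(q,a,q_\mathsf L,q_\mathsf R)$ is $\Omega(q)$, and an infinite sequence of transitions is accepting if the maximal priority occurring infinitely often is even. $\Delta(a)$ is the set of transitions over letter $a$, and $\Delta(q,a)$ those from state $q$ over $a$. All states of the automata are assumed productive ($L(\mathcal A_q)\neq\emptyset$ for each state $q$, where $\mathcal A_q$ has initial state $q$). Disjointness game $G_\cap(\mathcal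 A,\mathcal B)$: positions are pairs $(q^\mathcal A_i,q^\mathcal B_i)$, starting at $(q_0^\mathcal A,q_0^\mathcal B)$. In round $i$, player Automaton chooses a letter $a_i\in\Sigma$, a transition $\delta^\mathcal A_i=(q^\mathcal A_i,a_i,q^\mathcal A_{\mathsf L,i},q^\mathcal A_{\mathsf R,i})\in\Delta^\mathcal A(q^\mathcal A_i,a_i)$ and a transition $\delta^\mathcal B_i=(q^\mathcal B_i,a_i,q^\mathcal B_{\mathsf L,i},q^\mathcal B_{\mathsf R,i})\in\Delta^\mathcal B(q^\mathcal B_i,a_i)$; then player Pathfinder chooses $d_i\in\{\mathsf L,\mathsf R\}$; the next position is $(q^\mathcal A_{d_i,i},q^\mathcal B_{d_i,i})$. Automaton wins an infinite play iff both sequences $\delta^\mathcal A_0\delta^\mathcal A_1\cdots$ and $\delta^\mathcal B_0\delta^\mathcal B_1\cdots$ are accepting; otherwise Pathfinder wins. *)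

theory Defs
  imports Main
begin

datatype dir = L | R

type_synonym 'a tree = "dir list \<Rightarrow> 'a"

text \<open>A transition (q, a, q_L, q_R).\<close>
type_synonym ('q,'a) trans = "'q \<times> 'a \<times> 'q \<times> 'q"

record ('q,'a) npta =
  states :: "'q set"
  init :: 'q
  pri :: "'q \<Rightarrow> nat"
  delta :: "('q,'a) trans set"

definition tr_src :: "('q,'a) trans \<Rightarrow> 'q" where
  "tr_src \<delta> = fst \<delta>"

definition tr_letter :: "('q,'a) trans \<Rightarrow> 'a" where
  "tr_letter \<delta> = fst (snd \<delta>)"

definition tr_succ :: "('q,'a) trans \<Rightarrow> dir \<Rightarrow> 'q" where
  "tr_succ \<delta> d = (case d of L \<Rightarrow> fst (snd (snd \<delta>)) | R \<Rightarrow> snd (snd (snd \<delta>)))"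

definition parity_acc :: "(nat \<Rightarrow> nat) \<Rightarrow> bool" where
  "parity_acc p \<longleftrightarrow> (\<exists>m. even m \<and> (\<exists>\<^sub>\<infinity>n. p n = m) \<and> (\<forall>\<^sub>\<infinity>n. p n \<le> m))"

definition is_npta :: "'a set \<Rightarrow> ('q,'a) npta \<Rightarrow> bool" where
  "is_npta \<Sigma> A \<longleftrightarrow> finite \<Sigma> \<and> finite (states A) \<and> init A \<in> states A \<and>
     delta A \<subseteq> states A \<times> \<Sigma> \<times> states A \<times> states A"

definition is_run :: "('q,'a) npta \<Rightarrow> 'q \<Rightarrow> 'a tree \<Rightarrow> 'q tree \<Rightarrow> bool" where
  "is_run A q t \<rho> \<longleftrightarrow> \<rho> [] = q \<and>
     (\<forall>u. (\<rho> u, t u, \<rho> (u @ [L]), \<rho> (u @ [R])) \<in> delta A)"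

definition branch_prefix :: "(nat \<Rightarrow> dir) \<Rightarrow> nat \<Rightarrow> dir list" where
  "branch_prefix \<pi> n = map \<pi> [0..<n]"

definition accepting_run :: "('q,'a) npta \<Rightarrow> 'q tree \<Rightarrow> bool" where
  "accepting_run A \<rho> \<longleftrightarrow>
     (\<forall>\<pi>. parity_acc (\<lambda>n. pri A (\<rho> (branch_prefix \<pi> n))))"

definition lang_from :: "'a set \<Rightarrow> ('q,'a) npta \<Rightarrow> 'q \<Rightarrow> 'a tree set" where
  "lang_from \<Sigma> A q = {t. (\<forall>u. t u \<in> \<Sigma>) \<and> (\<exists>\<rho>. is_run A q t \<rho> \<and> accepting_run A \<rho>)}"

definition lang :: "'a set \<Rightarrow> ('q,'a) npta \<Rightarrow> 'a tree set" where
  "lang \<Sigma> A = lang_from \<Sigma> A (init A)"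

definition productive :: "'a set \<Rightarrow> ('q,'a) npta \<Rightarrow> bool" where
  "productive \<Sigma> A \<longleftrightarrow> (\<forall>q \<in> states A. lang_from \<Sigma> A q \<noteq> {})"

definition trans_seq_acc :: "('q,'a) npta \<Rightarrow> (nat \<Rightarrow> ('q,'a) trans) \<Rightarrow> bool" where
  "trans_seq_acc A \<delta>s \<longleftrightarrow> parity_acc (\<lambda>i. pri A (tr_src (\<delta>s i)))"

text \<open>An infinite play of the disjointness game G_cap(A,B): in round i Automaton picks
  a letter a_i in Sigma and transitions dA i, dB i over a_i from the current states,
  Pathfinder picks d i, and the next position is the pair of d i-successors.\<close>
definition is_play :: "'a set \<Rightarrow> ('p,'a) npta \<Rightarrow> ('q,'a) npta \<Rightarrow>
    (nat \<Rightarrow> ('p,'a) trans) \<Rightarrow> (nat \<Rightarrow> ('q,'a) trans) \<Rightarrow> (nat \<Rightarrow> dir) \<Rightarrow> bool" where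
  "is_play \<Sigma> A B dA dB d \<longleftrightarrow>
     tr_src (dA 0) = init A \<and> tr_src (dB 0) = init B \<and>
     (\<forall>i. dA i \<in> delta A \<and> dB i \<in> delta B \<and>
          tr_letter (dA i) \<in> \<Sigma> \<and> tr_letter (dA i) = tr_letter (dB i) \<and>
          tr_src (dA (Suc i)) = tr_succ (dA i) (d i) \<and>
          tr_src (dB (Suc i)) = tr_succ (dB i) (d i))"

definition automaton_wins :: "('p,'a) npta \<Rightarrow> ('q,'a) npta \<Rightarrow>
    (nat \<Rightarrow> ('p,'a) trans) \<Rightarrow> (nat \<Rightarrow> ('q,'a) trans) \<Rightarrow> bool" where
  "automaton_wins A B dA dB \<longleftrightarrow> trans_seq_acc A dA \<and> trans_seq_acc B dB"

end

theory Submission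
  imports Defs "HOL-Library.Infinite_Set"
begin

definition cons :: "('x \<Rightarrow> dir set) \<Rightarrow> (dir list \<Rightarrow> 'x) \<Rightarrow> dir list \<Rightarrow> bool" where
  "cons C w u \<longleftrightarrow> (\<forall>k<length u. u ! k \<in> C (w (take k u)))"


lemma parity_acc_iff:
  "parity_acc p \<longleftrightarrow> (\<exists>m. even m \<and> infinite {n. p n = m} \<and> finite {n. \<not> p n \<le> m})"
  unfolding parity_acc_def INFM_iff_infinite MOST_iff_cofinite by simp

definition cnt :: "(nat \<Rightarrow> bool) \<Rightarrow> nat \<Rightarrow> nat" where
  "cnt c n = card {j. j < n \<and> c (Suc j)}"

lemma cnt_0[simp]: "cnt c 0 = 0" by (simp add: cnt_def)

lemma cnt_Suc: "cnt c (Suc n) = cnt c n + (if c (Suc n) then 1 else 0)"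
proof -
  have "{j. j < Suc n \<and> c (Suc j)} = {j. j < n \<and> c (Suc j)} \<union> (if c (Suc n) then {n} else {})"
    using less_Suc_eq by auto
  then show ?thesis unfolding cnt_def by (auto simp: card_insert_if)
qed

lemma cnt_mono: "n \<le> m \<Longrightarrow> cnt c n \<le> cnt c m"
  by (induction m rule: dec_induct) (auto simp: cnt_Suc)

lemma cnt_strict: "c n' \<Longrightarrow> n < n' \<Longrightarrow> cnt c n < cnt c n'"
proof -
  assume "c n'" "n < n'"
  then obtain j where j: "n' = Suc j" "n \<le> j" by (cases n') auto
  have "cnt c n \<le> cnt c j" using j cnt_mono by blast
  then show ?thesis using j \<open>c n'\<close> by (simp add: cnt_Suc)
qed

lemma cnt_inj: "inj_on (cnt c) {n. c n}"
  unfolding inj_on_def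
  by (metis cnt_strict less_irrefl mem_Collect_eq nat_neq_iff)

lemma T_a: "finite {k. \<not> q k \<le> M} \<Longrightarrow> finite {n. c n \<and> \<not> q (cnt c n) \<le> M}"
proof -
  assume "finite {k. \<not> q k \<le> M}"
  then have "finite (cnt c -` {k. \<not> q k \<le> M} \<inter> {n. c n})"
    by (rule finite_vimage_IntI) (rule cnt_inj)
  moreover have "{n. c n \<and> \<not> q (cnt c n) \<le> M} = cnt c -` {k. \<not> q k \<le> M} \<inter> {n. c n}" by auto
  ultimately show ?thesis by simp
qed

lemma cnt_unbounded:
  assumes "infinite {j. c (Suc j)}" shows "\<exists>n. k \<le> cnt c n"
proof (induction k)
  case 0 then show ?case by auto
next
  case (Suc k)
  then obtain n where n: "k \<le> cnt c n" by auto
  from assms obtain j where j: "j \<ge> n" "c (Suc j)"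
    unfolding infinite_nat_iff_unbounded_le by auto
  have "cnt c (Suc j) = cnt c j + 1" using j by (simp add: cnt_Suc)
  moreover have "cnt c n \<le> cnt c j" using j cnt_mono by blast
  ultimately show ?case using n by (intro exI[of _ "Suc j"]) simp
qed

lemma cnt_surj:
  assumes "infinite {j. c (Suc j)}" "k \<ge> 1" shows "\<exists>n. c n \<and> cnt c n = k"
proof -
  define n where "n = (LEAST n. k \<le> cnt c n)"
  have nk: "k \<le> cnt c n" unfolding n_def using cnt_unbounded[OF assms(1)] by (metis LeastI)
  have "n \<noteq> 0" using nk assms(2) by (cases n) auto
  then obtain n' where n': "n = Suc n'" by (cases n) auto
  have "\<not> k \<le> cnt c n'" using n' unfolding n_def by (metis lessI not_less_Least n_def)
  then show ?thesis using nk n' by (auto simp: cnt_Suc split: if_splits intro!: exI[of _ n])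
qed

lemma T_b:
  assumes "infinite {j. c (Suc j)}" "infinite {k. q k = M}"
  shows "infinite {n. c n \<and> q (cnt c n) = M}"
proof
  assume fin: "finite {n. c n \<and> q (cnt c n) = M}"
  have "{k. q k = M} \<subseteq> insert 0 (cnt c ` {n. c n \<and> q (cnt c n) = M})"
  proof
    fix k assume "k \<in> {k. q k = M}"
    show "k \<in> insert 0 (cnt c ` {n. c n \<and> q (cnt c n) = M})"
    proof (cases "k = 0")
      case False
      then obtain n where "c n" "cnt c n = k" using cnt_surj[OF assms(1), of k] by auto
      then show ?thesis using \<open>k \<in> _\<close> by auto
    qed simp
  qed
  then have "finite {k. q k = M}" using fin by (meson finite_imageI finite_insert finite_subset)
  then show False using assms(2) by simp
qed

lemma c_finite: "finite {j. c (Suc j)} \<Longrightarrow> finite {n. c n}"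
proof -
  assume "finite {j. c (Suc j)}"
  moreover have "{n. c n} \<subseteq> insert 0 (Suc ` {j. c (Suc j)})"
    by (auto, metis image_eqI mem_Collect_eq not0_implies_Suc)
  ultimately show ?thesis by (meson finite_imageI finite_insert finite_subset)
qed

lemma shuffle_parity:
  fixes c :: "nat \<Rightarrow> bool" and g q1 q2 :: "nat \<Rightarrow> nat"
  assumes g1: "\<And>n. c n \<Longrightarrow> g n = q1 (cnt c n)"
    and g2: "\<And>n. \<not> c n \<Longrightarrow> g n = q2 (cnt (\<lambda>n. \<not> c n) n)"
    and a1: "infinite {j. c (Suc j)} \<Longrightarrow> parity_acc q1"
    and a2: "infinite {j. \<not> c (Suc j)} \<Longrightarrow> parity_acc q2"
  shows "parity_acc g"
proof -
  let ?c2 = "\<lambda>n. \<not> c n"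
  have sub: "\<And>M1 M2. {n. \<not> g n \<le> max M1 M2} \<subseteq> {n. c n \<and> \<not> q1 (cnt c n) \<le> M1} \<union> {n. ?c2 n \<and> \<not> q2 (cnt ?c2 n) \<le> M2}"
  proof
    fix M1 M2 n assume "n \<in> {n. \<not> g n \<le> max M1 M2}"
    then show "n \<in> {n. c n \<and> \<not> q1 (cnt c n) \<le> M1} \<union> {n. ?c2 n \<and> \<not> q2 (cnt ?c2 n) \<le> M2}"
      using g1[of n] g2[of n] by (cases "c n") auto
  qed
  show ?thesis
  proof (cases "infinite {j. c (Suc j)}")
    case i1: True
    then obtain m1 where m1: "even m1" "infinite {n. q1 n = m1}" "finite {n. \<not> q1 n \<le> m1}"
      using a1 parity_acc_iff by blast
    show ?thesis
    proof (cases "infinite {j. \<not> c (Suc j)}")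
      case i2: True
      then obtain m2 where m2: "even m2" "infinite {n. q2 n = m2}" "finite {n. \<not> q2 n \<le> m2}"
        using a2 parity_acc_iff by blast
      have f: "finite {n. \<not> g n \<le> max m1 m2}"
        using sub[of m1 m2] T_a[OF m1(3), of c] T_a[OF m2(3), of ?c2]
        by (meson finite_Un finite_subset)
      have "infinite {n. g n = max m1 m2}"
      proof (cases "m2 \<le> m1")
        case True
        have "{n. c n \<and> q1 (cnt c n) = m1} \<subseteq> {n. g n = max m1 m2}" using g1 True by auto
        then show ?thesis using T_b[OF i1 m1(2)] True by (meson finite_subset)
      next
        case False
        have "{n. ?c2 n \<and> q2 (cnt ?c2 n) = m2} \<subseteq> {n. g n = max m1 m2}" using g2 False by auto
        then show ?thesis using T_b[OF i2 m2(2)] False by (meson finite_subset)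
      qed
      moreover have "even (max m1 m2)" using m1 m2 by (simp add: max_def)
      ultimately show ?thesis unfolding parity_acc_iff using f by blast
    next
      case False
      then have fc: "finite {n. ?c2 n}" using c_finite[of ?c2] by simp
      have "{n. \<not> g n \<le> m1} \<subseteq> {n. c n \<and> \<not> q1 (cnt c n) \<le> m1} \<union> {n. ?c2 n}" using g1 by auto
      then have f: "finite {n. \<not> g n \<le> m1}" using T_a[OF m1(3), of c] fc by (meson finite_Un finite_subset)
      have "{n. c n \<and> q1 (cnt c n) = m1} \<subseteq> {n. g n = m1}" using g1 by auto
      then have "infinite {n. g n = m1}" using T_b[OF i1 m1(2)] by (meson finite_subset)
      then show ?thesis unfolding parity_acc_iff using f m1 by blast
    qed
  next
    case False
    then have fc: "finite {n. c n}" using c_finite[of c] by simp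
    have i2: "infinite {j. \<not> c (Suc j)}"
    proof
      assume "finite {j. \<not> c (Suc j)}"
      then have "finite ({j. c (Suc j)} \<union> {j. \<not> c (Suc j)})" using False by simp
      moreover have "{j. c (Suc j)} \<union> {j. \<not> c (Suc j)} = UNIV" by auto
      ultimately show False by simp
    qed
    then obtain m2 where m2: "even m2" "infinite {n. q2 n = m2}" "finite {n. \<not> q2 n \<le> m2}"
      using a2 parity_acc_iff by blast
    have "{n. \<not> g n \<le> m2} \<subseteq> {n. c n} \<union> {n. ?c2 n \<and> \<not> q2 (cnt ?c2 n) \<le> m2}" using g2 by auto
    then have f: "finite {n. \<not> g n \<le> m2}" using T_a[OF m2(3), of ?c2] fc by (meson finite_Un finite_subset)
    have "{n. ?c2 n \<and> q2 (cnt ?c2 n) = m2} \<subseteq> {n. g n = m2}" using g2 by auto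
    then have "infinite {n. g n = m2}" using T_b[OF i2 m2(2)] by (meson finite_subset)
    then show ?thesis unfolding parity_acc_iff using f m2 by blast
  qed
qed

lemma bp_Suc: "branch_prefix \<pi> (Suc n) = branch_prefix \<pi> n @ [\<pi> n]"
  by (simp add: branch_prefix_def)
lemma bp_length[simp]: "length (branch_prefix \<pi> n) = n"
  by (simp add: branch_prefix_def)
lemma bp_nth: "k < n \<Longrightarrow> branch_prefix \<pi> n ! k = \<pi> k"
  by (simp add: branch_prefix_def)
lemma bp_take: "k \<le> n \<Longrightarrow> take k (branch_prefix \<pi> n) = branch_prefix \<pi> k"
  by (simp add: branch_prefix_def take_map)
lemma bp_0[simp]: "branch_prefix \<pi> 0 = []"
  by (simp add: branch_prefix_def)

lemma parity_shift: "parity_acc p \<Longrightarrow> parity_acc (\<lambda>n. p (n + k))"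
proof -
  assume "parity_acc p"
  then obtain m where m: "even m" "infinite {n. p n = m}" "finite {n. \<not> p n \<le> m}"
    using parity_acc_iff by blast
  have inj: "inj (\<lambda>n::nat. n + k)" by (simp add: inj_on_def)
  have "{n. \<not> p (n + k) \<le> m} = (\<lambda>n. n + k) -` {n. \<not> p n \<le> m}" by auto
  then have f: "finite {n. \<not> p (n + k) \<le> m}" using finite_vimageI[OF m(3) inj] by simp
  have "{n. p n = m} \<subseteq> {..<k} \<union> (\<lambda>n. n + k) ` {n. p (n + k) = m}"
  proof
    fix n assume "n \<in> {n. p n = m}"
    then show "n \<in> {..<k} \<union> (\<lambda>n. n + k) ` {n. p (n + k) = m}"
      by (cases "n < k") (auto intro!: image_eqI[of _ _ "n - k"])
  qed
  then have "infinite {n. p (n + k) = m}" using m(2)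
    by (meson finite_Un finite_imageI finite_lessThan finite_subset)
  then show ?thesis using f m(1) parity_acc_iff by blast
qed

lemma chain_branch:
  assumes "\<And>n. \<exists>ds. V (Suc n) = V n @ ds"
  shows "\<exists>\<pi>. \<forall>n. V n = branch_prefix \<pi> (length (V n))"
proof -
  have ch: "n \<le> m \<Longrightarrow> \<exists>ds. V m = V n @ ds" for n m
  proof (induction m rule: dec_induct)
    case (step m)
    then show ?case using assms[of m] by (metis append.assoc)
  qed simp
  define \<pi> where "\<pi> k = (if \<exists>n. k < length (V n) then V (SOME n. k < length (V n)) ! k else L)" for k
  have nth: "k < length (V n) \<Longrightarrow> \<pi> k = V n ! k" for k n
  proof -
    assume k: "k < length (V n)"
    define n' where "n' = (SOME n. k < length (V n))"
    have k': "k < length (V n')" unfolding n'_def using k by (rule someI)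
    have "\<pi> k = V n' ! k" unfolding \<pi>_def n'_def using k by auto
    also have "\<dots> = V n ! k"
    proof (cases "n \<le> n'")
      case True then obtain ds where "V n' = V n @ ds" using ch by blast
      then show ?thesis using k by (simp add: nth_append)
    next
      case False then obtain ds where "V n = V n' @ ds" using ch by (meson nle_le)
      then show ?thesis using k' by (simp add: nth_append)
    qed
    finally show ?thesis .
  qed
  show ?thesis
    by (intro exI[of _ \<pi>] allI nth_equalityI) (auto simp: bp_nth nth)
qed

type_synonym ('p,'q,'a) pr = "('p,'a) trans \<times> ('q,'a) trans"

locale gm =
  fixes \<Sigma> :: "'a set" and A :: "('p,'a) npta" and B :: "('q,'a) npta"
begin

definition valid :: "('p,'q,'a) pr \<Rightarrow> bool" where
  "valid x \<longleftrightarrow> fst x \<in> delta A \<and> snd x \<in> delta B \<and> tr_letter (fst x) \<in> \<Sigma> \<and>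
     tr_letter (fst x) = tr_letter (snd x)"

definition srcs :: "('p,'q,'a) pr \<Rightarrow> 'p \<times> 'q" where
  "srcs x = (tr_src (fst x), tr_src (snd x))"

definition succs :: "('p,'q,'a) pr \<Rightarrow> dir \<Rightarrow> 'p \<times> 'q" where
  "succs x d = (tr_succ (fst x) d, tr_succ (snd x) d)"

definition acc2 :: "(nat \<Rightarrow> ('p,'q,'a) pr) \<Rightarrow> bool" where
  "acc2 f \<longleftrightarrow> parity_acc (\<lambda>n. pri A (tr_src (fst (f n)))) \<and> parity_acc (\<lambda>n. pri B (tr_src (snd (f n))))"

definition wtree :: "(('p,'q,'a) pr \<Rightarrow> dir set) \<Rightarrow> (dir list \<Rightarrow> ('p,'q,'a) pr) \<Rightarrow> bool" where
  "wtree C w \<longleftrightarrow> (\<forall>u. cons C w u \<longrightarrow> valid (w u) \<and> (\<forall>d\<in>C (w u). srcs (w (u @ [d])) = succs (w u) d)) \<and>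
     (\<forall>\<pi>. (\<forall>n. \<pi> n \<in> C (w (branch_prefix \<pi> n))) \<longrightarrow> acc2 (\<lambda>n. w (branch_prefix \<pi> n)))"

definition wit :: "(('p,'q,'a) pr \<Rightarrow> dir set) \<Rightarrow> 'p \<times> 'q \<Rightarrow> bool" where
  "wit C s \<longleftrightarrow> (\<exists>w. wtree C w \<and> srcs (w []) = s)"

definition Good :: "(('p,'q,'a) pr \<Rightarrow> dir set) \<Rightarrow> bool" where
  "Good C \<longleftrightarrow> (\<exists>P. (\<forall>x. P x \<in> C x) \<and> (\<forall>s. wit (\<lambda>x. {P x}) s \<longrightarrow> wit C s))"

end

lemma cons_Nil[simp]: "cons C w []" by (simp add: cons_def)

lemma cons_snoc: "cons C w (u @ [d]) \<longleftrightarrow> cons C w u \<and> d \<in> C (w u)"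
  unfolding cons_def
  by (auto simp: nth_append less_Suc_eq)

lemma cons_take: "cons C w u \<Longrightarrow> cons C w (take k u)"
  unfolding cons_def by (simp add: min_def)

lemma cons_bp: "cons C w (branch_prefix \<pi> n) \<longleftrightarrow> (\<forall>k<n. \<pi> k \<in> C (w (branch_prefix \<pi> k)))"
  unfolding cons_def by (auto simp: bp_nth bp_take)

lemma cons_append: "cons C w (u @ v) \<longleftrightarrow> cons C w u \<and> cons C (\<lambda>v. w (u @ v)) v"
  by (induction v rule: rev_induct) (auto simp: cons_snoc simp flip: append_assoc)

context gm begin

lemma wtree_transfer:
  assumes w: "wtree C w" and eq: "\<And>u. cons C w u \<Longrightarrow> C' (w u) = C (w u)"
  shows "wtree C' w"
proof -
  have cc: "cons C' w u \<Longrightarrow> cons C w u" for u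
    by (induction u rule: rev_induct) (auto simp: cons_snoc eq)
  show ?thesis unfolding wtree_def
  proof (intro conjI allI impI)
    fix u assume "cons C' w u"
    then have "cons C w u" by (rule cc)
    then show "valid (w u)"
      using w eq unfolding wtree_def by auto
  next
    fix u assume "cons C' w u"
    then have "cons C w u" by (rule cc)
    then show "\<forall>d\<in>C' (w u). srcs (w (u @ [d])) = succs (w u) d"
      using w eq unfolding wtree_def by auto
  next
    fix \<pi> assume h: "\<forall>n. \<pi> n \<in> C' (w (branch_prefix \<pi> n))"
    have "\<pi> n \<in> C (w (branch_prefix \<pi> n))" for n
    proof -
      have "cons C' w (branch_prefix \<pi> n)" using h by (simp add: cons_bp)
      then have "cons C w (branch_prefix \<pi> n)" by (rule cc)
      then show ?thesis using h eq by auto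
    qed
    then show "acc2 (\<lambda>n. w (branch_prefix \<pi> n))" using w unfolding wtree_def by auto
  qed
qed

lemma wtree_shift:
  assumes w: "wtree C w" and u: "cons C w u"
  shows "wtree C (\<lambda>v. w (u @ v))"
  unfolding wtree_def
proof (intro conjI allI impI)
  fix v assume "cons C (\<lambda>v. w (u @ v)) v"
  then have "cons C w (u @ v)" using u cons_append by blast
  then show "valid (w (u @ v))"
    using w unfolding wtree_def by (metis append.assoc)
next
  fix v assume "cons C (\<lambda>v. w (u @ v)) v"
  then have "cons C w (u @ v)" using u cons_append by blast
  then show "\<forall>d\<in>C (w (u @ v)). srcs (w (u @ v @ [d])) = succs (w (u @ v)) d"
    using w unfolding wtree_def by (metis append.assoc)
next
  fix \<pi>' assume h: "\<forall>n. \<pi>' n \<in> C (w (u @ branch_prefix \<pi>' n))"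
  define \<pi> where "\<pi> n = (if n < length u then u ! n else \<pi>' (n - length u))" for n
  have b0: "branch_prefix \<pi> (length u) = u"
    by (rule nth_equalityI) (auto simp: bp_nth \<pi>_def)
  have bk: "branch_prefix \<pi> (length u + k) = u @ branch_prefix \<pi>' k" for k
  proof (induction k)
    case 0 show ?case using b0 by simp
  next
    case (Suc k) then show ?case by (simp add: bp_Suc \<pi>_def)
  qed
  have "\<pi> n \<in> C (w (branch_prefix \<pi> n))" for n
  proof (cases "n < length u")
    case True
    then have "branch_prefix \<pi> n = take n u" using bp_take[of n "length u" \<pi>] b0 by simp
    then show ?thesis using u True unfolding cons_def by (simp add: \<pi>_def)
  next
    case False
    then obtain k where "n = length u + k" by (metis le_add_diff_inverse not_less)
    then show ?thesis using h bk by (simp add: \<pi>_def)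
  qed
  then have "acc2 (\<lambda>n. w (branch_prefix \<pi> n))" using w unfolding wtree_def by auto
  then have "acc2 (\<lambda>n. w (branch_prefix \<pi> (n + length u)))"
    unfolding acc2_def using parity_shift by blast
  then show "acc2 (\<lambda>n. w (u @ branch_prefix \<pi>' n))" using bk by (simp add: add.commute)
qed

end

fun sstep :: "(dir list \<Rightarrow> 'x) \<Rightarrow> (dir list \<Rightarrow> 'x) \<Rightarrow> 'x \<Rightarrow> dir list \<times> dir list \<times> bool \<Rightarrow> dir \<Rightarrow> dir list \<times> dir list \<times> bool" where
  "sstep w1 w2 x0 (v1, v2, c) d =
    (if (if (if c then w1 v1 else w2 v2) = x0 then d = L else c) then (v1 @ [d], v2, True) else (v1, v2 @ [d], False))"

definition sst :: "(dir list \<Rightarrow> 'x) \<Rightarrow> (dir list \<Rightarrow> 'x) \<Rightarrow> 'x \<Rightarrow> dir list \<Rightarrow> dir list \<times> dir list \<times> bool" where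
  "sst w1 w2 x0 u = foldl (sstep w1 w2 x0) ([], [], True) u"

fun slab :: "(dir list \<Rightarrow> 'x) \<Rightarrow> (dir list \<Rightarrow> 'x) \<Rightarrow> dir list \<times> dir list \<times> bool \<Rightarrow> 'x" where
  "slab w1 w2 (v1, v2, c) = (if c then w1 v1 else w2 v2)"

lemma sst_Nil[simp]: "sst w1 w2 x0 [] = ([], [], True)" by (simp add: sst_def)
lemma sst_snoc: "sst w1 w2 x0 (u @ [d]) = sstep w1 w2 x0 (sst w1 w2 x0 u) d" by (simp add: sst_def)

lemma sst_inv:
  assumes "cons C (\<lambda>u. slab w1 w2 (sst w1 w2 x0 u)) u" and r: "w2 [] = x0"
  shows "case sst w1 w2 x0 u of (v1, v2, c) \<Rightarrow> cons (C(x0:={L})) w1 v1 \<and> cons (C(x0:={R})) w2 v2 \<and>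
           (c \<longrightarrow> w2 v2 = x0) \<and> (\<not> c \<longrightarrow> w1 v1 = x0)"
  using assms(1)
proof (induction u rule: rev_induct)
  case Nil then show ?case using r by simp
next
  case (snoc d u)
  obtain v1 v2 c where S: "sst w1 w2 x0 u = (v1, v2, c)" by (cases "sst w1 w2 x0 u") auto
  from snoc.prems have cu: "cons C (\<lambda>u. slab w1 w2 (sst w1 w2 x0 u)) u" and
    dC: "d \<in> C (slab w1 w2 (v1, v2, c))" using S by (simp_all add: cons_snoc)
  from snoc.IH[OF cu] S have I: "cons (C(x0:={L})) w1 v1" "cons (C(x0:={R})) w2 v2"
    "c \<longrightarrow> w2 v2 = x0" "\<not> c \<longrightarrow> w1 v1 = x0" by (simp_all add: fun_upd_def)
  show ?case using I dC unfolding sst_snoc S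
    by (cases c; cases "w1 v1 = x0"; cases "w2 v2 = x0"; cases d) (simp_all add: cons_snoc fun_upd_def)
qed

context gm begin

lemma thread:
  assumes w: "wtree C' w" and V: "\<And>n. V n = branch_prefix \<pi>' (length (V n))"
    and cV: "\<And>n. cons C' w (V n)" and ub: "\<And>k. \<exists>n. k < length (V n)"
  shows "acc2 (\<lambda>k. w (branch_prefix \<pi>' k))"
proof -
  have "\<pi>' k \<in> C' (w (branch_prefix \<pi>' k))" for k
  proof -
    obtain n where n: "k < length (V n)" using ub by blast
    have "cons C' w (take (Suc k) (V n))" using cV cons_take by blast
    also have "take (Suc k) (V n) = branch_prefix \<pi>' (Suc k)"
      using V[of n] n by (metis Suc_leI bp_take)
    finally show ?thesis by (simp add: cons_bp)
  qed
  then show ?thesis using w unfolding wtree_def by auto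
qed

lemma shuffle:
  assumes w1: "wtree (C(x0:={L})) w1" and w2: "wtree (C(x0:={R})) w2" and r: "w2 [] = x0"
  shows "wtree C (\<lambda>u. slab w1 w2 (sst w1 w2 x0 u))"
proof -
  let ?W = "\<lambda>u. slab w1 w2 (sst w1 w2 x0 u)"
  let ?C1 = "C(x0:={L})" and ?C2 = "C(x0:={R})"
  have loc: "valid (?W u) \<and> (\<forall>d\<in>C (?W u). srcs (?W (u @ [d])) = succs (?W u) d)"
    if cu: "cons C ?W u" for u
  proof -
    obtain v1 v2 c where S: "sst w1 w2 x0 u = (v1, v2, c)" by (cases "sst w1 w2 x0 u") auto
    have I: "cons ?C1 w1 v1" "cons ?C2 w2 v2" "c \<longrightarrow> w2 v2 = x0" "\<not> c \<longrightarrow> w1 v1 = x0"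
      using sst_inv[OF cu r] S by auto
    have l1: "valid (w1 v1) \<and> (\<forall>d\<in>?C1 (w1 v1). srcs (w1 (v1 @ [d])) = succs (w1 v1) d)"
      using w1 I(1) unfolding wtree_def by blast
    have l2: "valid (w2 v2) \<and> (\<forall>d\<in>?C2 (w2 v2). srcs (w2 (v2 @ [d])) = succs (w2 v2) d)"
      using w2 I(2) unfolding wtree_def by blast
    have "valid (?W u)" using l1 l2 S by (cases c) simp_all
    moreover have "srcs (?W (u @ [d])) = succs (?W u) d" if "d \<in> C (?W u)" for d
      using l1 l2 I that
      by (cases c; cases "w1 v1 = x0"; cases "w2 v2 = x0"; cases d) (simp_all add: sst_snoc S)
    ultimately show ?thesis by blast
  qed
  show ?thesis unfolding wtree_def
  proof (intro conjI allI impI)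
    fix u assume "cons C ?W u" then show "valid (?W u)" using loc by blast
  next
    fix u assume "cons C ?W u" then show "\<forall>d\<in>C (?W u). srcs (?W (u @ [d])) = succs (?W u) d" using loc by blast
  next
    fix \<pi> assume h: "\<forall>n. \<pi> n \<in> C (?W (branch_prefix \<pi> n))"
    define S where "S n = sst w1 w2 x0 (branch_prefix \<pi> n)" for n
    define V1 where "V1 n = fst (S n)" for n
    define V2 where "V2 n = fst (snd (S n))" for n
    define c where "c n = snd (snd (S n))" for n
    have Sn: "S n = (V1 n, V2 n, c n)" for n by (simp add: V1_def V2_def c_def)
    have SSuc: "S (Suc n) = sstep w1 w2 x0 (S n) (\<pi> n)" for n
      by (simp add: S_def bp_Suc sst_snoc)
    have S0: "S 0 = ([], [], True)" by (simp add: S_def)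
    have cb: "cons C ?W (branch_prefix \<pi> n)" for n using h by (simp add: cons_bp)
    have inv: "cons ?C1 w1 (V1 n) \<and> cons ?C2 w2 (V2 n)" for n
      using sst_inv[OF cb r, of n] Sn[of n] unfolding S_def by auto
    have st: "V1 (Suc n) = (if c (Suc n) then V1 n @ [\<pi> n] else V1 n) \<and>
              V2 (Suc n) = (if c (Suc n) then V2 n else V2 n @ [\<pi> n])" for n
      using SSuc[of n] Sn[of n] Sn[of "Suc n"] by (auto split: if_splits)
    have lab: "?W (branch_prefix \<pi> n) = (if c n then w1 (V1 n) else w2 (V2 n))" for n
      using Sn[of n] unfolding S_def by simp
    have len1: "length (V1 n) = cnt c n" for n
    proof (induction n)
      case 0 then show ?case using S0 Sn[of 0] by simp
    next
      case (Suc n) then show ?case using st[of n] by (simp add: cnt_Suc)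
    qed
    have len2: "length (V2 n) = cnt (\<lambda>n. \<not> c n) n" for n
    proof (induction n)
      case 0 then show ?case using S0 Sn[of 0] by simp
    next
      case (Suc n) then show ?case using st[of n] by (simp add: cnt_Suc)
    qed
    obtain \<pi>1 where p1: "\<And>n. V1 n = branch_prefix \<pi>1 (length (V1 n))"
      using chain_branch[of V1] st by (metis append.right_neutral)
    obtain \<pi>2 where p2: "\<And>n. V2 n = branch_prefix \<pi>2 (length (V2 n))"
      using chain_branch[of V2] st by (metis append.right_neutral)
    have acc1: "acc2 (\<lambda>k. w1 (branch_prefix \<pi>1 k))" if i: "infinite {j. c (Suc j)}"
    proof (rule thread[OF w1 p1])
      show "cons ?C1 w1 (V1 n)" for n using inv by blast
      show "\<exists>n. k < length (V1 n)" for k using cnt_unbounded[OF i, of "Suc k"] len1 by (metis Suc_le_eq)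
    qed
    have acc2': "acc2 (\<lambda>k. w2 (branch_prefix \<pi>2 k))" if i: "infinite {j. \<not> c (Suc j)}"
    proof (rule thread[OF w2 p2])
      show "cons ?C2 w2 (V2 n)" for n using inv by blast
      show "\<exists>n. k < length (V2 n)" for k
        using cnt_unbounded[of "\<lambda>n. \<not> c n", OF i, of "Suc k"] len2 by (metis Suc_le_eq)
    qed
    have lab1: "c n \<Longrightarrow> ?W (branch_prefix \<pi> n) = w1 (branch_prefix \<pi>1 (cnt c n))" for n
      using lab[of n] p1[of n] len1[of n] by simp
    have lab2: "\<not> c n \<Longrightarrow> ?W (branch_prefix \<pi> n) = w2 (branch_prefix \<pi>2 (cnt (\<lambda>n. \<not> c n) n))" for n
      using lab[of n] p2[of n] len2[of n] by simp
    have "parity_acc (\<lambda>n. pri A (tr_src (fst (?W (branch_prefix \<pi> n)))))"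
      by (rule shuffle_parity[of c _ "\<lambda>k. pri A (tr_src (fst (w1 (branch_prefix \<pi>1 k))))"
            "\<lambda>k. pri A (tr_src (fst (w2 (branch_prefix \<pi>2 k))))"])
        (use lab1 lab2 acc1 acc2' in \<open>auto simp: acc2_def\<close>)
    moreover have "parity_acc (\<lambda>n. pri B (tr_src (snd (?W (branch_prefix \<pi> n)))))"
      by (rule shuffle_parity[of c _ "\<lambda>k. pri B (tr_src (snd (w1 (branch_prefix \<pi>1 k))))"
            "\<lambda>k. pri B (tr_src (snd (w2 (branch_prefix \<pi>2 k))))"])
        (use lab1 lab2 acc1 acc2' in \<open>auto simp: acc2_def\<close>)
    ultimately show "acc2 (\<lambda>n. ?W (branch_prefix \<pi> n))" by (simp add: acc2_def)
  qed
qed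

end

lemma dir_set_single: "(D::dir set) \<noteq> {} \<Longrightarrow> D \<noteq> UNIV \<Longrightarrow> D = {SOME d. d \<in> D}"
proof -
  assume a: "D \<noteq> {}" "D \<noteq> UNIV"
  obtain d0 where d0: "d0 \<in> D" using a(1) by blast
  obtain d1 where d1: "d1 \<notin> D" using a(2) by blast
  have "D = {d0}"
  proof (rule set_eqI)
    fix x show "x \<in> D \<longleftrightarrow> x \<in> {d0}"
      using d0 d1 by (cases x; cases d0; cases d1) simp_all
  qed
  then show ?thesis by simp
qed

context gm begin

lemma Good_all:
  assumes fin: "finite {x. valid x}"
  shows "\<forall>C. card {x. valid x \<and> C x = UNIV} = n \<longrightarrow> (\<forall>x. C x \<noteq> {}) \<longrightarrow> Good C"
proof (induction n)
  case 0
  show ?case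
  proof (intro allI impI)
    fix C :: "('p,'q,'a) pr \<Rightarrow> dir set"
    assume c0: "card {x. valid x \<and> C x = UNIV} = 0" and ne: "\<forall>x. C x \<noteq> {}"
    have fX: "finite {x. valid x \<and> C x = UNIV}" using fin by (rule rev_finite_subset) blast
    have "{x. valid x \<and> C x = UNIV} = {}" using card_0_eq[OF fX] c0 by (rule iffD1)
    then have e: "\<And>x. valid x \<Longrightarrow> C x \<noteq> UNIV" by blast
    define P where "P x = (SOME d. d \<in> C x)" for x
    have PC: "P x \<in> C x" for x
    proof -
      have "C x \<noteq> {}" using ne by (rule spec)
      then show ?thesis unfolding P_def by (simp add: some_in_eq)
    qed
    have "wit C s" if "wit (\<lambda>x. {P x}) s" for s
    proof -
      from that obtain w where w: "wtree (\<lambda>x. {P x}) w" "srcs (w []) = s" unfolding wit_def by blast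
      have "wtree C w"
      proof (rule wtree_transfer[OF w(1)])
        fix u assume "cons (\<lambda>x. {P x}) w u"
        then have "valid (w u)" using w(1) unfolding wtree_def by blast
        then have "C (w u) \<noteq> UNIV" "C (w u) \<noteq> {}" using e ne by blast+
        then show "C (w u) = {P (w u)}" unfolding P_def by (rule dir_set_single[rotated])
      qed
      then show ?thesis using w(2) unfolding wit_def by blast
    qed
    then show "Good C" unfolding Good_def using PC by blast
  qed
next
  case (Suc n)
  show ?case
  proof (intro allI impI)
    fix C :: "('p,'q,'a) pr \<Rightarrow> dir set"
    assume cn: "card {x. valid x \<and> C x = UNIV} = Suc n" and ne: "\<forall>x. C x \<noteq> {}"
    let ?X = "{x. valid x \<and> C x = UNIV}"
    have finX: "finite ?X" using fin by (rule rev_finite_subset) blast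
    have "?X \<noteq> {}" proof assume e0: "?X = {}" show False using cn unfolding e0 by simp qed
    then obtain x0 where x0: "x0 \<in> ?X" by blast
    have x0v: "valid x0" and Cx0: "C x0 = UNIV" using x0 by blast+
    have cardd: "card {x. valid x \<and> (C(x0:=D)) x = UNIV} = n" if "D \<noteq> UNIV" for D
    proof -
      have "{x. valid x \<and> (C(x0:=D)) x = UNIV} = ?X - {x0}"
      proof (rule set_eqI)
        fix x show "x \<in> {x. valid x \<and> (C(x0:=D)) x = UNIV} \<longleftrightarrow> x \<in> ?X - {x0}"
          using that by (cases "x = x0") simp_all
      qed
      then show ?thesis using cn x0 finX by (simp del: split_paired_All split_paired_Ex)
    qed
    have LU: "{L} \<noteq> (UNIV :: dir set)" by (metis UNIV_I dir.distinct(1) singletonD)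
    have RU: "{R} \<noteq> (UNIV :: dir set)" by (metis UNIV_I dir.distinct(1) singletonD)
    have neD: "\<forall>x. (C(x0:=D)) x \<noteq> {}" if "D \<noteq> {}" for D using ne that by (metis fun_upd_apply)
    have G1: "Good (C(x0:={L}))" using Suc.IH cardd[OF LU] neD[of "{L}"] by blast
    have G2: "Good (C(x0:={R}))" using Suc.IH cardd[OF RU] neD[of "{R}"] by blast
    show "Good C"
    proof (cases "\<exists>w2. wtree (C(x0:={R})) w2 \<and> w2 [] = x0")
      case True
      then obtain w2 where w2: "wtree (C(x0:={R})) w2" "w2 [] = x0" by blast
      from G1 obtain P where P: "\<forall>x. P x \<in> (C(x0:={L})) x" "\<forall>s. wit (\<lambda>x. {P x}) s \<longrightarrow> wit (C(x0:={L})) s"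
        unfolding Good_def by blast
      have "P x \<in> C x" for x using P(1) Cx0 by (metis UNIV_I fun_upd_apply)
      moreover have "wit C s" if ws: "wit (\<lambda>x. {P x}) s" for s
      proof -
        obtain w1 where w1: "wtree (C(x0:={L})) w1" "srcs (w1 []) = s" using P(2) ws unfolding wit_def by blast
        have "wtree C (\<lambda>u. slab w1 w2 (sst w1 w2 x0 u))" by (rule shuffle[OF w1(1) w2])
        then show ?thesis using w1(2) unfolding wit_def by (intro exI[of _ "\<lambda>u. slab w1 w2 (sst w1 w2 x0 u)"]) simp
      qed
      ultimately show ?thesis unfolding Good_def by blast
    next
      case False
      from G2 obtain P where P: "\<forall>x. P x \<in> (C(x0:={R})) x" "\<forall>s. wit (\<lambda>x. {P x}) s \<longrightarrow> wit (C(x0:={R})) s"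
        unfolding Good_def by blast
      have "P x \<in> C x" for x using P(1) Cx0 by (metis UNIV_I fun_upd_apply)
      moreover have "wit C s" if ws: "wit (\<lambda>x. {P x}) s" for s
      proof -
        obtain w where w: "wtree (C(x0:={R})) w" "srcs (w []) = s" using P(2) ws unfolding wit_def by blast
        have av: "w u \<noteq> x0" if "cons (C(x0:={R})) w u" for u
        proof
          assume "w u = x0"
          then show False using wtree_shift[OF w(1) that] False by (metis append_Nil2)
        qed
        have "wtree C w"
          by (rule wtree_transfer[OF w(1)]) (metis av fun_upd_apply)
        then show ?thesis using w(2) unfolding wit_def by blast
      qed
      ultimately show ?thesis unfolding Good_def by blast
    qed
  qed
qed

end

theorem mainTheorem3:
  fixes \<Sigma> :: "'a set" and A :: "('p,'a) npta" and B :: "('q,'a) npta"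
  assumes "is_npta \<Sigma> A" and "is_npta \<Sigma> B"
    and "productive \<Sigma> A" and "productive \<Sigma> B"
    and "lang \<Sigma> A \<inter> lang \<Sigma> B = {}"
  shows "\<exists>P :: ('p,'a) trans \<times> ('q,'a) trans \<Rightarrow> dir.
           \<forall>dA dB d. is_play \<Sigma> A B dA dB d \<and> (\<forall>i. d i = P (dA i, dB i))
                     \<longrightarrow> \<not> automaton_wins A B dA dB"
proof -
  interpret gm \<Sigma> A B .
  have fA: "finite (delta A)"
  proof (rule rev_finite_subset)
    show "finite (states A \<times> \<Sigma> \<times> states A \<times> states A)"
      using assms(1) unfolding is_npta_def by (intro finite_cartesian_product) blast+
    show "delta A \<subseteq> states A \<times> \<Sigma> \<times> states A \<times> states A"
      using assms(1) unfolding is_npta_def by blast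
  qed
  have fB: "finite (delta B)"
  proof (rule rev_finite_subset)
    show "finite (states B \<times> \<Sigma> \<times> states B \<times> states B)"
      using assms(2) unfolding is_npta_def by (intro finite_cartesian_product) blast+
    show "delta B \<subseteq> states B \<times> \<Sigma> \<times> states B \<times> states B"
      using assms(2) unfolding is_npta_def by blast
  qed
  have fin: "finite {x. valid x}"
  proof (rule rev_finite_subset)
    show "finite (delta A \<times> delta B)" using fA fB by (rule finite_cartesian_product)
    show "{x. valid x} \<subseteq> delta A \<times> delta B"
    proof
      fix x assume "x \<in> {x. valid x}"
      then show "x \<in> delta A \<times> delta B" by (cases x) (simp add: valid_def)
    qed
  qed
  have "Good (\<lambda>x. UNIV)" by (rule Good_all[OF fin, rule_format, OF refl]) simp
  then obtain P where P: "\<forall>s. wit (\<lambda>x. {P x}) s \<longrightarrow> wit (\<lambda>x. UNIV) s" unfolding Good_def by blast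
  show ?thesis
  proof (intro exI[of _ P] allI impI notI)
    fix dA dB d
    assume h: "is_play \<Sigma> A B dA dB d \<and> (\<forall>i. d i = P (dA i, dB i))" and win: "automaton_wins A B dA dB"
    define w where "w u = (dA (length u), dB (length u))" for u :: "dir list"
    have "wtree (\<lambda>x. {P x}) w" unfolding wtree_def
    proof (intro conjI allI impI)
      fix u :: "dir list"
      have "dA (length u) \<in> delta A \<and> dB (length u) \<in> delta B \<and> tr_letter (dA (length u)) \<in> \<Sigma> \<and>
          tr_letter (dA (length u)) = tr_letter (dB (length u))" using h unfolding is_play_def by blast
      then show "valid (w u)" unfolding valid_def w_def fst_conv snd_conv by blast
    next
      fix u show "\<forall>d\<in>{P (w u)}. srcs (w (u @ [d])) = succs (w u) d"
        using h unfolding is_play_def srcs_def succs_def w_def by auto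
    next
      fix \<pi> show "acc2 (\<lambda>n. w (branch_prefix \<pi> n))"
        using win unfolding automaton_wins_def trans_seq_acc_def acc2_def w_def by simp
    qed
    moreover have "srcs (w []) = (init A, init B)" using h unfolding is_play_def srcs_def w_def by auto
    ultimately have "wit (\<lambda>x. {P x}) (init A, init B)" unfolding wit_def by blast
    with P obtain w' where w': "wtree (\<lambda>x. UNIV) w'" "srcs (w' []) = (init A, init B)"
      unfolding wit_def by blast
    have cu: "cons (\<lambda>x. UNIV) w' u" for u by (simp add: cons_def)
    have loc: "valid (w' u)" "\<And>d. srcs (w' (u @ [d])) = succs (w' u) d" for u
      using w'(1) cu[of u] unfolding wtree_def by blast+
    have br: "acc2 (\<lambda>n. w' (branch_prefix \<pi> n))" for \<pi>
      using w'(1) unfolding wtree_def by blast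
    define t where "t u = tr_letter (fst (w' u))" for u
    define \<rho>A where "\<rho>A u = tr_src (fst (w' u))" for u
    define \<rho>B where "\<rho>B u = tr_src (snd (w' u))" for u
    have tA: "t \<in> lang \<Sigma> A"
    proof -
      have "(\<rho>A u, t u, \<rho>A (u @ [L]), \<rho>A (u @ [R])) = fst (w' u)" for u
        using loc(2)[of u L] loc(2)[of u R]
        unfolding \<rho>A_def t_def srcs_def succs_def tr_src_def tr_letter_def tr_succ_def by simp
      moreover have "fst (w' u) \<in> delta A" for u using loc(1)[of u] unfolding valid_def by blast
      ultimately have "is_run A (init A) t \<rho>A"
        unfolding is_run_def using w'(2) by (simp add: \<rho>A_def srcs_def)
      moreover have "accepting_run A \<rho>A"
        unfolding accepting_run_def \<rho>A_def using br unfolding acc2_def by blast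
      moreover have "t u \<in> \<Sigma>" for u using loc(1)[of u] unfolding valid_def t_def by blast
      ultimately show ?thesis unfolding lang_def lang_from_def by blast
    qed
    have tB: "t \<in> lang \<Sigma> B"
    proof -
      have tt: "t u = tr_letter (snd (w' u))" for u using loc(1)[of u] unfolding valid_def t_def by simp
      have "(\<rho>B u, t u, \<rho>B (u @ [L]), \<rho>B (u @ [R])) = snd (w' u)" for u
        using loc(2)[of u L] loc(2)[of u R] tt[of u]
        unfolding \<rho>B_def srcs_def succs_def tr_src_def tr_letter_def tr_succ_def by simp
      moreover have "snd (w' u) \<in> delta B" for u using loc(1)[of u] unfolding valid_def by blast
      ultimately have "is_run B (init B) t \<rho>B"
        unfolding is_run_def using w'(2) by (simp add: \<rho>B_def srcs_def)
      moreover have "accepting_run B \<rho>B"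
        unfolding accepting_run_def \<rho>B_def using br unfolding acc2_def by blast
      moreover have "t u \<in> \<Sigma>" for u using loc(1)[of u] unfolding valid_def t_def by blast
      ultimately show ?thesis unfolding lang_def lang_from_def by blast
    qed
    show False using tA tB assms(5) by blast
  qed
qed

end
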